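(* Let $q \in \mathbb{N}$. (a) For $\psi \in \mathcal{D}^q$ and $i=1,\dots, I$, it holds that $\phi_i \in \mathcal{C}^{\uparrow,q }$ and $\phi_i' (u) >0$ for all $u \in \mathbb{R}_+$. (b) For $\bar{\psi } \in \bar{\mathcal{D}}^q$, it holds that $\gamma_i \in \mathcal{C}^{\uparrow,q}$ for $i=0,1,\dots,I$, and $\gamma_0' (z)>0$ for all $z \in \mathbb{R}_+$. (c) The map $\Upsilon$ is a bijection from $\mathcal{D}^q$ to $\bar{\mathcal{D}}^q$.
   Context: Fix $I\in\mathbb{N}$. $\mathcal{C}=\{f\in C(\mathbb{R}_+,\mathbb{R}_+):f(0)=0,f\text{ non-decreasing}\}$, $\mathcal{C}^\uparrow=\{f\in\mathcal{C}:f\text{ strictly increasing},\lim_{u\to\infty}f(u)=\infty\}$. For $f:\mathbb{R}_+\to\mathbb{R}$, $f^{\mathbb{R}}$ extends $f$ by $0$ on $(-\infty,0)$ and $f^{\mathbb{R},\uparrow}$ extends $f$ by $u\mapsto u$ on $(-\infty,0)$; $\mathcal{C}^q=\{f\in\mathcal{C}:f^{\mathbb{R}}\in C^q(\mathbb{R},\mathbb{R})\}$, $\mathcal{C}^{\uparrow,q}=\{f\in\mathcal{C}^\uparrow:f^{\mathbb{R},\uparrow}\in C^q(\mathbb{R},\mathbb{R})\}$. For $\psi\in\mathcal{C}^I$, $\phi_i(u)=u-\sum_{j=1}^I2(i\wedge j)\psi_j(u)$. $\mathcal{D}=\{\psi\in\mathcal{C}^I:\phi_I\in\mathcal{C}^\uparrow,\sum_{i}i\sup_{u_1\ne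 u_2}\frac{\psi_i(u_1)-\psi_i(u_2)}{\phi_i(u_1)-\phi_i(u_2)}<\frac12\}$ (each $\phi_i\in\mathcal{C}^\uparrow$ then), $\bar{\mathcal{D}}=\{\bar\psi\in\mathcal{C}^I:\sum_ii\sup_{z_1\ne z_2}\frac{\bar\psi_i(z_1)-\bar\psi_i(z_2)}{z_1-z_2}<\frac12\}$, $\mathcal{D}^q=\mathcal{D}\cap(\mathcal{C}^q)^I$, $\bar{\mathcal{D}}^q=\bar{\mathcal{D}}\cap(\mathcal{C}^q)^I$. $\Upsilon(\psi)_i=\psi_i\circ\phi_i^{-1}$. For $\bar\psi\in\mathcal{C}^I$: $\gamma_I(z)=z$, $\gamma_i(z)=z+\sum_{j>i}2(j-i)\bar\psi_j(\gamma_j(z))$ for $i=I-1,\dots,0$. *)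

theory Defs
  imports "HOL-Analysis.Analysis"
begin

text \<open>Functions on R_+ are represented as real => real; only the values on {0..}
  matter for the classes C, C^up. Tuples (psi_1,...,psi_I) are functions nat => (real => real).\<close>

definition Cset :: "(real \<Rightarrow> real) set" where
  "Cset = {f. continuous_on {0..} f \<and> f 0 = 0 \<and> mono_on {0..} f \<and> (\<forall>u\<ge>0. 0 \<le> f u)}"

definition Cup :: "(real \<Rightarrow> real) set" where
  "Cup = {f \<in> Cset. strict_mono_on {0..} f \<and> filterlim f at_top at_top}"

definition ext0 :: "(real \<Rightarrow> real) \<Rightarrow> real \<Rightarrow> real" where
  "ext0 f x = (if x < 0 then 0 else f x)"

definition extup :: "(real \<Rightarrow> real) \<Rightarrow> real \<Rightarrow> real" where
  "extup f x = (if x < 0 then x else f x)"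

definition Ck :: "nat \<Rightarrow> (real \<Rightarrow> real) \<Rightarrow> bool" where
  "Ck q g \<longleftrightarrow> (\<forall>k<q. \<forall>x. ((deriv ^^ k) g) differentiable (at x))
                 \<and> continuous_on UNIV ((deriv ^^ q) g)"

definition Cq :: "nat \<Rightarrow> (real \<Rightarrow> real) set" where
  "Cq q = {f \<in> Cset. Ck q (ext0 f)}"

definition Cupq :: "nat \<Rightarrow> (real \<Rightarrow> real) set" where
  "Cupq q = {f \<in> Cup. Ck q (extup f)}"

definition phi :: "nat \<Rightarrow> (nat \<Rightarrow> real \<Rightarrow> real) \<Rightarrow> nat \<Rightarrow> real \<Rightarrow> real" where
  "phi I \<psi> i u = u - (\<Sum>j=1..I. 2 * real (min i j) * \<psi> j u)"

text \<open>Canonical representatives of tuples: components outside 1..I are 0, and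
  each component vanishes on the negative reals.\<close>
definition canon :: "nat \<Rightarrow> (nat \<Rightarrow> real \<Rightarrow> real) \<Rightarrow> bool" where
  "canon I \<psi> \<longleftrightarrow> (\<forall>i. i \<notin> {1..I} \<longrightarrow> \<psi> i = (\<lambda>_. 0)) \<and> (\<forall>i\<in>{1..I}. \<forall>u<0. \<psi> i u = 0)"

definition Dset :: "nat \<Rightarrow> (nat \<Rightarrow> real \<Rightarrow> real) set" where
  "Dset I = {\<psi>. canon I \<psi> \<and> (\<forall>i\<in>{1..I}. \<psi> i \<in> Cset) \<and> phi I \<psi> I \<in> Cup \<and>
     (\<Sum>i=1..I. ereal (real i) *
        (SUP p\<in>{(u1,u2). 0 \<le> u1 \<and> 0 \<le> u2 \<and> u1 \<noteq> u2}.
           ereal ((\<psi> i (fst p) - \<psi> i (snd p)) / (phi I \<psi> i (fst p) - phi I \<psi> i (snd p)))))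
     < ereal (1/2)}"

definition barDset :: "nat \<Rightarrow> (nat \<Rightarrow> real \<Rightarrow> real) set" where
  "barDset I = {b. canon I b \<and> (\<forall>i\<in>{1..I}. b i \<in> Cset) \<and>
     (\<Sum>i=1..I. ereal (real i) *
        (SUP p\<in>{(z1,z2). 0 \<le> z1 \<and> 0 \<le> z2 \<and> z1 \<noteq> z2}.
           ereal ((b i (fst p) - b i (snd p)) / (fst p - snd p))))
     < ereal (1/2)}"

definition Dq :: "nat \<Rightarrow> nat \<Rightarrow> (nat \<Rightarrow> real \<Rightarrow> real) set" where
  "Dq I q = {\<psi> \<in> Dset I. \<forall>i\<in>{1..I}. \<psi> i \<in> Cq q}"

definition barDq :: "nat \<Rightarrow> nat \<Rightarrow> (nat \<Rightarrow> real \<Rightarrow> real) set" where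
  "barDq I q = {b \<in> barDset I. \<forall>i\<in>{1..I}. b i \<in> Cq q}"

definition Ups :: "nat \<Rightarrow> (nat \<Rightarrow> real \<Rightarrow> real) \<Rightarrow> nat \<Rightarrow> real \<Rightarrow> real" where
  "Ups I \<psi> i z = (if i \<in> {1..I} \<and> 0 \<le> z
      then \<psi> i (the_inv_into {0..} (phi I \<psi> i) z) else 0)"

function gam :: "nat \<Rightarrow> (nat \<Rightarrow> real \<Rightarrow> real) \<Rightarrow> nat \<Rightarrow> real \<Rightarrow> real" where
  "gam I b i z = (if I \<le> i then z
      else z + (\<Sum>j\<in>{i<..I}. 2 * real (j - i) * b j (gam I b j z)))"
  by pat_completeness auto
termination
  by (relation "Wellfounded.measure (\<lambda>(I, b, i, z). I - i)") auto

end

theory Submission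
  imports Defs
begin


lemma Ck_0: "Ck 0 g \<longleftrightarrow> continuous_on UNIV g"
  by (simp add: Ck_def)

lemma Ck_Suc: "Ck (Suc q) g \<longleftrightarrow> (\<forall>x. g differentiable (at x)) \<and> Ck q (deriv g)"
proof -
  have e: "\<And>k. (deriv ^^ Suc k) g = (deriv ^^ k) (deriv g)" by (simp add: funpow_Suc_right del: funpow.simps)
  have "(\<forall>k<Suc q. \<forall>x. ((deriv ^^ k) g) differentiable (at x)) \<longleftrightarrow>
        (\<forall>x. g differentiable (at x)) \<and> (\<forall>k<q. \<forall>x. ((deriv ^^ k) (deriv g)) differentiable (at x))"
  proof safe
    fix x assume "\<forall>k<Suc q. \<forall>x. (deriv ^^ k) g differentiable at x"
    then show "g differentiable at x" by (metis funpow_0 zero_less_Suc)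
  next
    fix k x assume "\<forall>k<Suc q. \<forall>x. (deriv ^^ k) g differentiable at x" "k < q"
    then show "(deriv ^^ k) (deriv g) differentiable at x" by (metis Suc_less_eq e)
  next
    fix k x assume "\<forall>x. g differentiable at x" "\<forall>k<q. \<forall>x. (deriv ^^ k) (deriv g) differentiable at x" "k < Suc q"
    then show "(deriv ^^ k) g differentiable at x"
      by (cases k) (auto simp: e simp del: funpow.simps)
  qed
  then show ?thesis unfolding Ck_def e by simp
qed

lemma Ck_down: "Ck (Suc q) g \<Longrightarrow> Ck q g"
proof (induction q arbitrary: g)
  case 0
  then show ?case by (auto simp: Ck_Suc Ck_0 intro!: continuous_at_imp_continuous_on differentiable_imp_continuous_within)
next
  case (Suc q)
  then show ?case by (metis Ck_Suc)
qed

lemma Ck_mono: "Ck q g \<Longrightarrow> k \<le> q \<Longrightarrow> Ck k g"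
  by (induction q arbitrary: k) (auto dest: Ck_down simp: le_Suc_eq)

lemma Ck_cont: "Ck q g \<Longrightarrow> continuous_on UNIV g"
  using Ck_mono[of q g 0] by (simp add: Ck_0)

lemma Ck_isCont: "Ck q g \<Longrightarrow> isCont g x"
  using Ck_cont by (simp add: continuous_on_eq_continuous_at)

lemma Ck_diff: "Ck q g \<Longrightarrow> 1 \<le> q \<Longrightarrow> g differentiable (at x)"
  using Ck_mono[of q g 1] by (simp add: Ck_Suc)

lemma Ck_DERIV: "Ck q g \<Longrightarrow> 1 \<le> q \<Longrightarrow> (g has_real_derivative deriv g x) (at x)"
  using Ck_diff DERIV_deriv_iff_real_differentiable by blast

lemma deriv_eqI: "(\<And>x. (f has_real_derivative f' x) (at x)) \<Longrightarrow> deriv f = f'"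
  by (rule ext) (rule DERIV_imp_deriv)

lemma Ck_SucI: "(\<And>x. (f has_real_derivative f' x) (at x)) \<Longrightarrow> Ck q f' \<Longrightarrow> Ck (Suc q) f"
  unfolding Ck_Suc using deriv_eqI[of f f'] real_differentiable_def by auto

lemma Ck_SucD: "Ck (Suc q) f \<Longrightarrow> (f has_real_derivative deriv f x) (at x)"
  using Ck_DERIV by fastforce

lemma Ck_SucD2: "Ck (Suc q) f \<Longrightarrow> Ck q (deriv f)"
  by (simp add: Ck_Suc)

lemma Ck_const: "Ck q (\<lambda>x. c)"
  by (induction q arbitrary: c) (auto simp: Ck_0 intro!: Ck_SucI[where f'="\<lambda>x. 0"] derivative_eq_intros)

lemma Ck_id: "Ck q (\<lambda>x. x)"
  by (cases q) (auto simp: Ck_0 Ck_const intro!: Ck_SucI[where f'="\<lambda>x. 1"] derivative_eq_intros)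

lemma Ck_add: "Ck q f \<Longrightarrow> Ck q g \<Longrightarrow> Ck q (\<lambda>x. f x + g x)"
proof (induction q arbitrary: f g)
  case 0 then show ?case by (auto simp: Ck_0 intro!: continuous_intros)
next
  case (Suc q)
  show ?case
    by (rule Ck_SucI[where f'="\<lambda>x. deriv f x + deriv g x"])
      (rule derivative_intros Ck_SucD Suc.prems Suc.IH Ck_SucD2 | assumption)+
qed


lemma Ck_cmult: "Ck q f \<Longrightarrow> Ck q (\<lambda>x. c * f x)"
proof (induction q arbitrary: f)
  case 0 then show ?case by (auto simp: Ck_0 intro!: continuous_intros)
next
  case (Suc q)
  show ?case
    by (rule Ck_SucI[where f'="\<lambda>x. c * deriv f x"])
      (rule DERIV_cmult[OF Ck_SucD[OF Suc.prems]], rule Suc.IH[OF Ck_SucD2[OF Suc.prems]])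
qed


lemma Ck_minus: "Ck q f \<Longrightarrow> Ck q g \<Longrightarrow> Ck q (\<lambda>x. f x - g x)"
  using Ck_add[of q f "\<lambda>x. (-1) * g x"] Ck_cmult[of q g "-1"] by simp

lemma Ck_mult: "Ck q f \<Longrightarrow> Ck q g \<Longrightarrow> Ck q (\<lambda>x. f x * g x)"
proof (induction q arbitrary: f g)
  case 0 then show ?case by (auto simp: Ck_0 intro!: continuous_intros)
next
  case (Suc q)
  have f: "\<And>x. (f has_real_derivative deriv f x) (at x)" by (rule Ck_SucD[OF Suc.prems(1)])
  have g: "\<And>x. (g has_real_derivative deriv g x) (at x)" by (rule Ck_SucD[OF Suc.prems(2)])
  show ?case
  proof (rule Ck_SucI[where f'="\<lambda>x. deriv f x * g x + f x * deriv g x"])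
    fix x show "((\<lambda>x. f x * g x) has_real_derivative deriv f x * g x + f x * deriv g x) (at x)"
      using DERIV_mult[OF f g] by (simp add: mult.commute)
    show "Ck q (\<lambda>x. deriv f x * g x + f x * deriv g x)"
      by (rule Ck_add[OF Suc.IH[OF Ck_SucD2[OF Suc.prems(1)] Ck_down[OF Suc.prems(2)]]
           Suc.IH[OF Ck_down[OF Suc.prems(1)] Ck_SucD2[OF Suc.prems(2)]]])
  qed
qed


lemma Ck_sum: "finite A \<Longrightarrow> (\<And>j. j \<in> A \<Longrightarrow> Ck q (f j)) \<Longrightarrow> Ck q (\<lambda>x. \<Sum>j\<in>A. f j x)"
  by (induction A rule: finite_induct) (auto intro!: Ck_add Ck_const)

lemma Ck_comp: "Ck q f \<Longrightarrow> Ck q g \<Longrightarrow> Ck q (\<lambda>x. f (g x))"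
proof (induction q arbitrary: f g)
  case 0 then show ?case 
    by (auto simp: Ck_0 intro!: continuous_on_compose2[of UNIV f UNIV g])
next
  case (Suc q)
  have f: "\<And>x. (f has_real_derivative deriv f x) (at x)" by (rule Ck_SucD[OF Suc.prems(1)])
  have g: "\<And>x. (g has_real_derivative deriv g x) (at x)" by (rule Ck_SucD[OF Suc.prems(2)])
  show ?case
  proof (rule Ck_SucI[where f'="\<lambda>x. deriv f (g x) * deriv g x"])
    fix x show "((\<lambda>x. f (g x)) has_real_derivative deriv f (g x) * deriv g x) (at x)"
      by (rule DERIV_chain2[OF f g])
    show "Ck q (\<lambda>x. deriv f (g x) * deriv g x)"
      by (rule Ck_mult[OF Suc.IH[OF Ck_SucD2[OF Suc.prems(1)] Ck_down[OF Suc.prems(2)]] Ck_SucD2[OF Suc.prems(2)]])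
  qed
qed


lemma Ck_inverse: "Ck q h \<Longrightarrow> (\<And>x. h x \<noteq> 0) \<Longrightarrow> Ck q (\<lambda>x. inverse (h x))"
proof (induction q arbitrary: h)
  case 0 then show ?case by (auto simp: Ck_0 intro!: continuous_intros)
next
  case (Suc q)
  have hd: "\<And>x. (h has_real_derivative deriv h x) (at x)" by (rule Ck_SucD[OF Suc.prems(1)])
  have ih: "Ck q (\<lambda>x. inverse (h x))" by (rule Suc.IH[OF Ck_down[OF Suc.prems(1)] Suc.prems(2)])
  show ?case
  proof (rule Ck_SucI[where f'="\<lambda>x. (-1) * (deriv h x * (inverse (h x) * inverse (h x)))"])
    fix x show "((\<lambda>x. inverse (h x)) has_real_derivative (-1) * (deriv h x * (inverse (h x) * inverse (h x)))) (at x)"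
      using DERIV_inverse_fun[OF hd Suc.prems(2)[of x]] by (simp add: power2_eq_square)
    show "Ck q (\<lambda>x. (-1) * (deriv h x * (inverse (h x) * inverse (h x))))"
      by (rule Ck_cmult, rule Ck_mult[OF Ck_SucD2[OF Suc.prems(1)] Ck_mult[OF ih ih]])
  qed
qed

lemma inv_DERIV:
  assumes d: "\<And>x. (g has_real_derivative deriv g x) (at x)" and nz: "\<And>x. deriv g x \<noteq> 0" and b: "bij g"
  shows "(inv g has_real_derivative inverse (deriv g (inv g y))) (at y)" "isCont (inv g) y"
proof -
  have gi: "\<And>y. g (inv g y) = y" using b by (simp add: bij_is_surj surj_f_inv_f)
  have ig: "\<And>x. inv g (g x) = x" using b by (simp add: bij_is_inj)
  have c: "isCont (inv g) (g (inv g y))"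
    by (rule isCont_inverse_function[where d=1 and f=g and g="inv g" and x="inv g y"]) (simp_all add: ig DERIV_isCont[OF d])
  then show ic: "isCont (inv g) y" by (simp add: gi)
  show "(inv g has_real_derivative inverse (deriv g (inv g y))) (at y)"
  proof (rule DERIV_inverse_function[where a="y-1" and b="y+1"])
    show "(g has_real_derivative deriv g (inv g y)) (at (inv g y))" by (rule d)
    show "deriv g (inv g y) \<noteq> 0" by (rule nz)
  qed (simp_all add: gi ic)
qed

lemma Ck_inv: "Ck (Suc q) g \<Longrightarrow> (\<And>x. deriv g x \<noteq> 0) \<Longrightarrow> bij g \<Longrightarrow> Ck (Suc q) (inv g)"
proof (induction q)
  case 0
  have d: "\<And>x. (g has_real_derivative deriv g x) (at x)" by (rule Ck_SucD[OF 0(1)])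
  have ci: "Ck 0 (inv g)" using inv_DERIV(2)[OF d 0(2) 0(3)] by (simp add: Ck_0 continuous_on_eq_continuous_at)
  show ?case
    apply (rule Ck_SucI[where f'="\<lambda>y. inverse (deriv g (inv g y))"])
    apply (rule inv_DERIV(1)[OF d 0(2) 0(3)])
    by (rule Ck_inverse[OF Ck_comp[OF Ck_SucD2[OF 0(1)] ci]]) (simp add: 0(2))
next
  case (Suc q)
  have d: "\<And>x. (g has_real_derivative deriv g x) (at x)" by (rule Ck_SucD[OF Suc.prems(1)])
  have ci: "Ck (Suc q) (inv g)" by (rule Suc.IH[OF Ck_down[OF Suc.prems(1)] Suc.prems(2,3)])
  show ?case
    apply (rule Ck_SucI[where f'="\<lambda>y. inverse (deriv g (inv g y))"])
    apply (rule inv_DERIV(1)[OF d Suc.prems(2,3)])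
    by (rule Ck_inverse[OF Ck_comp[OF Ck_SucD2[OF Suc.prems(1)] ci]]) (simp add: Suc.prems(2))
qed



definition good :: "(real \<Rightarrow> real) \<Rightarrow> bool" where
  "good f \<longleftrightarrow> continuous_on UNIV f \<and> strict_mono f \<and> (\<forall>x<0. f x = x) \<and> f 0 = 0 \<and> filterlim f at_top at_top"

lemma good_surj: assumes "good f" shows "surj f"
proof -
  have "\<exists>x. f x = y" for y
  proof (cases "y < 0")
    case True then show ?thesis using assms good_def by blast
  next
    case False
    have "eventually (\<lambda>x. y \<le> f x) at_top" using assms unfolding good_def filterlim_at_top by blast
    then obtain N where N: "\<And>x. x \<ge> N \<Longrightarrow> y \<le> f x" by (auto simp: eventually_at_top_linorder)
    have c: "continuous_on {0..max N 0} f" using assms unfolding good_def by (auto intro: continuous_on_subset)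
    have "f 0 \<le> y" using assms False by (simp add: good_def)
    moreover have "y \<le> f (max N 0)" using N by simp
    ultimately show ?thesis using IVT'[of f 0 y "max N 0"] c by auto
  qed
  then show ?thesis by (metis surjI)
qed

lemma good_inj: "good f \<Longrightarrow> inj f"
  unfolding good_def by (simp add: strict_mono_on_imp_inj_on)

lemma good_bij: "good f \<Longrightarrow> bij f"
  by (simp add: bij_def good_inj good_surj)

lemma good_sm: "good f \<Longrightarrow> strict_mono f" by (simp add: good_def)
lemma good_le: "good f \<Longrightarrow> f x \<le> f y \<longleftrightarrow> x \<le> y" by (simp add: good_def strict_mono_less_eq)
lemma good_less: "good f \<Longrightarrow> f x < f y \<longleftrightarrow> x < y" by (simp add: good_def strict_mono_less)
lemma good_0: "good f \<Longrightarrow> f 0 = 0" by (simp add: good_def)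
lemma good_neg: "good f \<Longrightarrow> x < 0 \<Longrightarrow> f x = x" by (simp add: good_def)
lemma good_nonneg: assumes "good f" shows "0 \<le> f x \<longleftrightarrow> 0 \<le> x" using good_le[OF assms, of 0 x] good_0[OF assms] by simp
lemma good_cont: "good f \<Longrightarrow> isCont f x" by (simp add: good_def continuous_on_eq_continuous_at)

lemma good_f_inv: "good f \<Longrightarrow> f (inv f y) = y"
  by (simp add: good_surj surj_f_inv_f)
lemma good_inv_f: "good f \<Longrightarrow> inv f (f x) = x"
  by (simp add: good_inj)

lemma good_image: assumes "good f" shows "f ` {0..} = {0..}"
proof
  show "f ` {0..} \<subseteq> {0..}" using good_nonneg[OF assms] by auto
  show "{0..} \<subseteq> f ` {0..}"
  proof
    fix y :: real assume "y \<in> {0..}"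
    then have "inv f y \<in> {0..}" using good_nonneg[OF assms, of "inv f y"] good_f_inv[OF assms] by auto
    then show "y \<in> f ` {0..}" using good_f_inv[OF assms] by (metis image_eqI)
  qed
qed

lemma good_inv_into: assumes "good f" "0 \<le> z" shows "the_inv_into {0..} f z = inv f z"
proof (rule the_inv_into_f_eq)
  show "inj_on f {0..}" using good_inj[OF assms(1)] by (metis inj_on_subset subset_UNIV)
  show "f (inv f z) = z" using good_f_inv[OF assms(1)] .
  show "inv f z \<in> {0..}" using good_nonneg[OF assms(1), of "inv f z"] good_f_inv[OF assms(1)] assms(2) by auto
qed

lemma good_inv: assumes g: "good f" shows "good (inv f)"
proof -
  have fi: "\<And>y. f (inv f y) = y" using good_f_inv[OF g] .
  have if': "\<And>x. inv f (f x) = x" using good_inv_f[OF g] .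
  have c: "isCont (inv f) y" for y
  proof -
    have "isCont (inv f) (f (inv f y))"
      by (rule isCont_inverse_function[where d=1 and f=f and x="inv f y"]) (simp_all add: if' good_cont[OF g])
    then show ?thesis by (simp add: fi)
  qed
  have sm: "strict_mono (inv f)"
  proof (rule strict_monoI)
    fix x y :: real assume "x < y"
    then show "inv f x < inv f y" using good_le[OF g, of "inv f y" "inv f x"] fi by (metis not_le)
  qed
  have neg: "\<forall>x<0. inv f x = x" using good_neg[OF g] if' by metis
  have z: "inv f 0 = 0" using good_0[OF g] if' by metis
  have lim: "filterlim (inv f) at_top at_top"
    unfolding filterlim_at_top eventually_at_top_linorder
  proof
    fix Z show "\<exists>N. \<forall>n\<ge>N. Z \<le> inv f n"
      by (rule exI[of _ "f Z"]) (metis fi g good_le)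
  qed
  show ?thesis unfolding good_def using c sm neg z lim by (simp add: continuous_on_eq_continuous_at)
qed

lemma good_comp: assumes f: "good f" and g: "good g" shows "good (\<lambda>x. f (g x))"
  unfolding good_def
proof (intro conjI allI impI)
  show "continuous_on UNIV (\<lambda>x. f (g x))"
    using f g unfolding good_def by (auto intro: continuous_on_compose2[of UNIV f UNIV g])
  show "strict_mono (\<lambda>x. f (g x))" using good_less[OF f] good_less[OF g] by (simp add: strict_mono_def)
  show "f (g x) = x" if "x < 0" for x using good_neg[OF f] good_neg[OF g] that by simp
  show "f (g 0) = 0" using good_0[OF f] good_0[OF g] by simp
  show "filterlim (\<lambda>x. f (g x)) at_top at_top"
    using f g unfolding good_def by (auto intro: filterlim_compose)
qed

lemma good_Cup: assumes g: "good f" shows "f \<in> Cup"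
  unfolding Cup_def Cset_def
proof (intro CollectI conjI ballI allI impI)
  show "continuous_on {0..} f" using g unfolding good_def by (auto intro: continuous_on_subset)
  show "f 0 = 0" using good_0[OF g] .
  show "mono_on {0..} f" by (rule mono_onI) (simp add: good_le[OF g])
  show "0 \<le> f u" if "0 \<le> u" for u using good_nonneg[OF g] that by simp
  show "strict_mono_on {0..} f" by (rule strict_mono_onI) (simp add: good_less[OF g])
  show "filterlim f at_top at_top" using g by (simp add: good_def)
qed

lemma good_extup: "good f \<Longrightarrow> extup f = f"
  by (auto simp: extup_def good_neg)

lemma good_Cupq: "good f \<Longrightarrow> Ck q f \<Longrightarrow> f \<in> Cupq q"
  by (simp add: Cupq_def good_Cup good_extup)

lemma good_id: "good (\<lambda>x. x)"
  by (simp add: good_def strict_mono_def filterlim_ident)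

lemma mono_deriv_nonneg:
  fixes f :: "real \<Rightarrow> real"
  assumes m: "mono f" and d: "(f has_real_derivative l) (at x)" shows "0 \<le> l"
proof (rule ccontr)
  assume "\<not> 0 \<le> l"
  then obtain e where e: "e > 0" "\<And>h. h > 0 \<Longrightarrow> h < e \<Longrightarrow> f x > f (x + h)"
    using DERIV_neg_dec_right[OF d] by force
  have "f x > f (x + e/2)" using e by simp
  moreover have "f x \<le> f (x + e/2)" using m e(1) by (simp add: monoD)
  ultimately show False by simp
qed

lemma Cset_mono:
  assumes "f \<in> Cset" "\<forall>u<0. f u = 0" shows "mono f" "\<And>x. 0 \<le> f x"
proof -
  have m: "mono_on {0..} f" and nn: "\<And>u. 0 \<le> u \<Longrightarrow> 0 \<le> f u" using assms(1) by (auto simp: Cset_def)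
  show "0 \<le> f x" for x using nn assms(2) by (cases "x < 0") auto
  show "mono f"
  proof (rule monoI)
    fix x y :: real assume "x \<le> y"
    show "f x \<le> f y"
    proof (cases "x < 0")
      case True then show ?thesis using nn assms(2) by (cases "y < 0") auto
    next
      case False then show ?thesis using m \<open>x \<le> y\<close> by (auto simp: mono_on_def)
    qed
  qed
qed

lemma ext0_id: "\<forall>u<0. f u = 0 \<Longrightarrow> ext0 f = f"
  by (auto simp: ext0_def)

lemma sum_ident:
  fixes c :: "nat \<Rightarrow> real"
  assumes "i \<le> I"
  shows "(\<Sum>j=1..I. 2 * real j * c j) - (\<Sum>j=1..I. 2 * real (min i j) * c j) = (\<Sum>j\<in>{i<..I}. 2 * real (j - i) * c j)"
proof -
  have "(\<Sum>j=1..I. 2 * real j * c j) - (\<Sum>j=1..I. 2 * real (min i j) * c j)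
      = (\<Sum>j=1..I. 2 * (real j - real (min i j)) * c j)"
    by (simp add: sum_subtractf[symmetric] algebra_simps)
  also have "(\<Sum>j=1..I. 2 * (real j - real (min i j)) * c j) = (\<Sum>j\<in>{1..i} \<union> {i<..I}. 2 * (real j - real (min i j)) * c j)"
    using assms by (intro sum.cong) auto
  also have "(\<Sum>j\<in>{1..i} \<union> {i<..I}. 2 * (real j - real (min i j)) * c j)
      = (\<Sum>j\<in>{1..i}. 2 * (real j - real (min i j)) * c j) + (\<Sum>j\<in>{i<..I}. 2 * (real j - real (min i j)) * c j)"
    by (rule sum.union_disjoint) auto
  also have "(\<Sum>j\<in>{1..i}. 2 * (real j - real (min i j)) * c j) = 0"
    by (rule sum.neutral) auto
  also have "(\<Sum>j\<in>{i<..I}. 2 * (real j - real (min i j)) * c j) = (\<Sum>j\<in>{i<..I}. 2 * real (j - i) * c j)"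
    by (rule sum.cong) (auto simp: of_nat_diff)
  finally show ?thesis by simp
qed

declare gam.simps[simp del]

lemma gam_ge: "I \<le> i \<Longrightarrow> gam I b i = (\<lambda>z. z)"
  by (rule ext, subst gam.simps) simp

lemma gam_lt: "i < I \<Longrightarrow> gam I b i = (\<lambda>z. z + (\<Sum>j\<in>{i<..I}. 2 * real (j - i) * b j (gam I b j z)))"
  by (rule ext, subst gam.simps) simp

lemma gam_props:
  assumes cb: "\<And>j. j \<in> {1..I} \<Longrightarrow> b j \<in> Cset" and cn: "\<And>j u. j \<in> {1..I} \<Longrightarrow> u < 0 \<Longrightarrow> b j u = 0"
    and ck: "\<And>j. j \<in> {1..I} \<Longrightarrow> Ck q (b j)" and q: "1 \<le> q"
  shows "i \<le> I \<Longrightarrow> good (gam I b i) \<and> Ck q (gam I b i) \<and> (\<forall>z. 1 \<le> deriv (gam I b i) z)"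
proof (induction "I - i" arbitrary: i rule: less_induct)
  case less
  show ?case
  proof (cases "i < I")
    case False
    then have "gam I b i = (\<lambda>z. z)" by (simp add: gam_ge)
    moreover have "deriv (\<lambda>z::real. z) z = 1" for z by (rule DERIV_imp_deriv) (rule DERIV_ident)
    ultimately show ?thesis by (simp add: good_id Ck_id)
  next
    case True
    define A where "A = {i<..I}"
    have fA: "finite A" by (simp add: A_def)
    have A1: "j \<in> A \<Longrightarrow> j \<in> {1..I}" for j by (auto simp: A_def)
    have IH: "j \<in> A \<Longrightarrow> good (gam I b j) \<and> Ck q (gam I b j) \<and> (\<forall>z. 1 \<le> deriv (gam I b j) z)" for j
      using less.hyps[of j] by (auto simp: A_def)
    have bm: "j \<in> A \<Longrightarrow> mono (b j)" for j using Cset_mono(1)[OF cb[OF A1] ] cn A1 by blast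
    have bn: "j \<in> A \<Longrightarrow> 0 \<le> b j x" for j x using Cset_mono(2)[OF cb[OF A1] ] cn A1 by blast
    have b0: "j \<in> A \<Longrightarrow> b j 0 = 0" for j using cb[OF A1] by (simp add: Cset_def)
    have G: "gam I b i = (\<lambda>z. z + (\<Sum>j\<in>A. 2 * real (j - i) * b j (gam I b j z)))"
      using gam_lt[OF True] by (simp add: A_def)
    have ckG: "Ck q (gam I b i)" unfolding G
      apply (rule Ck_add[OF Ck_id])
      apply (rule Ck_sum[OF fA])
      apply (rule Ck_cmult)
      apply (rule Ck_comp[OF ck[OF A1]], assumption)
      using IH by blast
    have dG: "((gam I b i) has_real_derivative 1 + (\<Sum>j\<in>A. 2 * real (j - i) * (deriv (b j) (gam I b j z) * deriv (gam I b j) z))) (at z)" for z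
      unfolding G
      apply (rule DERIV_add[OF DERIV_ident])
      apply (rule DERIV_sum)
      subgoal for j
        apply (rule DERIV_cmult)
        apply (rule DERIV_chain2[where f="b j" and g="gam I b j"])
         apply (rule Ck_DERIV[OF ck[OF A1] q], assumption)
        using IH Ck_DERIV q by blast
      done
    have dnn: "j \<in> A \<Longrightarrow> 0 \<le> deriv (b j) x" for j x
      using mono_deriv_nonneg[OF bm Ck_DERIV[OF ck[OF A1] q]] by blast
    have d1: "1 \<le> deriv (gam I b i) z" for z
    proof -
      have "0 \<le> (\<Sum>j\<in>A. 2 * real (j - i) * (deriv (b j) (gam I b j z) * deriv (gam I b j) z))"
      proof (intro sum_nonneg mult_nonneg_nonneg)
        fix j assume j: "j \<in> A"
        show "0 \<le> deriv (b j) (gam I b j z)" using dnn[OF j] .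
        show "0 \<le> deriv (gam I b j) z" using IH[OF j] by (meson order_trans zero_le_one)
      qed auto
      then show ?thesis unfolding DERIV_imp_deriv[OF dG] by simp
    qed
    have ge: "z \<le> gam I b i z" for z unfolding G using bn by (auto intro!: sum_nonneg)
    have good: "good (gam I b i)" unfolding good_def
    proof (intro conjI allI impI)
      show "continuous_on UNIV (gam I b i)" by (rule Ck_cont[OF ckG])
      show "strict_mono (gam I b i)"
      proof (rule strict_monoI)
        fix x y :: real assume xy: "x < y"
        have "(\<Sum>j\<in>A. 2 * real (j - i) * b j (gam I b j x)) \<le> (\<Sum>j\<in>A. 2 * real (j - i) * b j (gam I b j y))"
        proof (rule sum_mono)
          fix j assume j: "j \<in> A"
          have "gam I b j x \<le> gam I b j y" using IH[OF j] xy by (simp add: good_le)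
          then have "b j (gam I b j x) \<le> b j (gam I b j y)" using bm[OF j] by (simp add: monoD)
          then show "2 * real (j - i) * b j (gam I b j x) \<le> 2 * real (j - i) * b j (gam I b j y)"
            by (simp add: mult_left_mono)
        qed
        then show "gam I b i x < gam I b i y" unfolding G using xy by simp
      qed
      show "gam I b i x = x" if "x < 0" for x
      proof -
        have "(\<Sum>j\<in>A. 2 * real (j - i) * b j (gam I b j x)) = 0"
        proof (rule sum.neutral, rule ballI)
          fix j assume j: "j \<in> A"
          have "gam I b j x = x" using good_neg[OF conjunct1[OF IH[OF j]] that] .
          then show "2 * real (j - i) * b j (gam I b j x) = 0" using cn[OF A1[OF j] that] by simp
        qed
        then show ?thesis unfolding G by simp
      qed
      show "gam I b i 0 = 0"
      proof -
        have "(\<Sum>j\<in>A. 2 * real (j - i) * b j (gam I b j 0)) = 0"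
        proof (rule sum.neutral, rule ballI)
          fix j assume j: "j \<in> A"
          have "gam I b j 0 = 0" using good_0[OF conjunct1[OF IH[OF j]]] .
          then show "2 * real (j - i) * b j (gam I b j 0) = 0" using b0[OF j] by simp
        qed
        then show ?thesis unfolding G by simp
      qed
      show "filterlim (gam I b i) at_top at_top"
        by (rule filterlim_at_top_mono[OF filterlim_ident]) (simp add: ge)
    qed
    show ?thesis using good ckG d1 by blast
  qed
qed



abbreviation prs :: "(real \<times> real) set" where
  "prs \<equiv> {(u1,u2). 0 \<le> u1 \<and> 0 \<le> u2 \<and> u1 \<noteq> u2}"

lemma phi_ident:
  assumes "i \<le> I"
  shows "phi I \<psi> i u = phi I \<psi> I u + (\<Sum>j\<in>{i<..I}. 2 * real (j - i) * \<psi> j u)"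
proof -
  have "(\<Sum>j=1..I. 2 * real (min I j) * \<psi> j u) = (\<Sum>j=1..I. 2 * real j * \<psi> j u)"
    by (rule sum.cong) auto
  then show ?thesis using sum_ident[OF assms, of "\<lambda>j. \<psi> j u"] unfolding phi_def by linarith
qed

lemma phi_fun: "phi I \<psi> i = (\<lambda>u. u - (\<Sum>j=1..I. 2 * real (min i j) * \<psi> j u))"
  by (simp add: fun_eq_iff phi_def)

lemma phi_Ck: "(\<And>j. j \<in> {1..I} \<Longrightarrow> Ck q (\<psi> j)) \<Longrightarrow> Ck q (phi I \<psi> i)"
  unfolding phi_fun
  by (rule Ck_minus[OF Ck_id Ck_sum], simp, rule Ck_cmult) auto

lemma dphi:
  assumes "\<And>j. j \<in> {1..I} \<Longrightarrow> Ck q (\<psi> j)" "1 \<le> q"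
  shows "(phi I \<psi> i has_real_derivative 1 - (\<Sum>j=1..I. 2 * real (min i j) * deriv (\<psi> j) u)) (at u)"
  unfolding phi_fun
  apply (rule DERIV_diff[OF DERIV_ident])
  apply (rule DERIV_sum)
  apply (rule DERIV_cmult)
  apply (rule Ck_DERIV[OF assms(1) assms(2)])
  by simp

lemma Dq_D:
  assumes "\<psi> \<in> Dq I q"
  shows "\<And>i. i \<notin> {1..I} \<Longrightarrow> \<psi> i = (\<lambda>_. 0)"
    "\<And>i u. i \<in> {1..I} \<Longrightarrow> u < 0 \<Longrightarrow> \<psi> i u = 0"
    "\<And>i. i \<in> {1..I} \<Longrightarrow> \<psi> i \<in> Cset"
    "\<And>i. i \<in> {1..I} \<Longrightarrow> Ck q (\<psi> i)"
    "phi I \<psi> I \<in> Cup"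
    "(\<Sum>i=1..I. ereal (real i) *
        (SUP p\<in>prs. ereal ((\<psi> i (fst p) - \<psi> i (snd p)) / (phi I \<psi> i (fst p) - phi I \<psi> i (snd p)))))
     < ereal (1/2)"
proof -
  show "\<And>i. i \<notin> {1..I} \<Longrightarrow> \<psi> i = (\<lambda>_. 0)" using assms by (simp add: Dq_def Dset_def canon_def)
  show z: "\<And>i u. i \<in> {1..I} \<Longrightarrow> u < 0 \<Longrightarrow> \<psi> i u = 0" using assms by (simp add: Dq_def Dset_def canon_def)
  show "\<And>i. i \<in> {1..I} \<Longrightarrow> \<psi> i \<in> Cset" using assms by (simp add: Dq_def Dset_def)
  show "\<And>i. i \<in> {1..I} \<Longrightarrow> Ck q (\<psi> i)"
  proof -
    fix i assume i: "i \<in> {1..I}"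
    have "Ck q (ext0 (\<psi> i))" using assms i by (simp add: Dq_def Cq_def)
    moreover have "ext0 (\<psi> i) = \<psi> i" using z[OF i] by (simp add: ext0_id)
    ultimately show "Ck q (\<psi> i)" by simp
  qed
  show "phi I \<psi> I \<in> Cup" using assms by (simp add: Dq_def Dset_def)
  show "(\<Sum>i=1..I. ereal (real i) *
        (SUP p\<in>prs. ereal ((\<psi> i (fst p) - \<psi> i (snd p)) / (phi I \<psi> i (fst p) - phi I \<psi> i (snd p)))))
     < ereal (1/2)" using assms by (simp add: Dq_def Dset_def)
qed

lemma phi_neg: "(\<And>j. j \<in> {1..I} \<Longrightarrow> \<psi> j u = 0) \<Longrightarrow> phi I \<psi> i u = u"
  by (simp add: phi_def)

lemma good_add:
  assumes f: "good f" and m: "mono s" and nn: "\<And>x. 0 \<le> s x" and neg: "\<And>x. x < 0 \<Longrightarrow> s x = 0"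
    and z: "s 0 = 0" and c: "continuous_on UNIV (\<lambda>x. f x + s x)"
  shows "good (\<lambda>x. f x + s x)"
  unfolding good_def
proof (intro conjI allI impI)
  show "continuous_on UNIV (\<lambda>x. f x + s x)" by (rule c)
  show "strict_mono (\<lambda>x. f x + s x)"
  proof (rule strict_monoI)
    fix x y :: real assume "x < y"
    then have "f x < f y" "s x \<le> s y" using good_less[OF f] m by (auto simp: monoD)
    then show "f x + s x < f y + s y" by simp
  qed
  show "f x + s x = x" if "x < 0" for x using good_neg[OF f that] neg[OF that] by simp
  show "f 0 + s 0 = 0" using good_0[OF f] z by simp
  show "filterlim (\<lambda>x. f x + s x) at_top at_top"
  proof -
    have "filterlim f at_top at_top" using f by (simp add: good_def)
    moreover have "eventually (\<lambda>x. f x \<le> f x + s x) at_top" using nn by (simp add: always_eventually)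
    ultimately show ?thesis by (rule filterlim_at_top_mono)
  qed
qed

lemma phiI_good:
  assumes D: "\<psi> \<in> Dq I q" and q: "1 \<le> q"
  shows "good (phi I \<psi> I)"
proof -
  let ?P = "phi I \<psi> I"
  have cup: "?P \<in> Cup" by (rule Dq_D(5)[OF D])
  have neg: "?P x = x" if "x < 0" for x using Dq_D(2)[OF D _ that] by (rule phi_neg)
  have smo: "strict_mono_on {0..} ?P" and z: "?P 0 = 0" and lim: "filterlim ?P at_top at_top"
    and nn: "\<And>u. 0 \<le> u \<Longrightarrow> 0 \<le> ?P u"
    using cup by (auto simp: Cup_def Cset_def)
  show ?thesis unfolding good_def
  proof (intro conjI allI impI)
    show "continuous_on UNIV ?P" by (rule Ck_cont[OF phi_Ck[OF Dq_D(4)[OF D]]])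
    show "strict_mono ?P"
    proof (rule strict_monoI)
      fix x y :: real assume xy: "x < y"
      show "?P x < ?P y"
      proof (cases "0 \<le> x")
        case True then show ?thesis using smo xy by (auto intro: strict_mono_onD)
      next
        case False
        then have "?P x = x" using neg by simp
        moreover have "0 \<le> ?P y \<or> ?P y = y" using nn neg by (cases "y < 0") auto
        ultimately show ?thesis using False xy by auto
      qed
    qed
    show "?P x = x" if "x < 0" for x using neg that .
    show "?P 0 = 0" by (rule z)
    show "filterlim ?P at_top at_top" by (rule lim)
  qed
qed

lemma Dq_mono:
  assumes D: "\<psi> \<in> Dq I q" and j: "j \<in> {1..I}"
  shows "mono (\<psi> j)" "\<And>x. 0 \<le> \<psi> j x"
  using Cset_mono[OF Dq_D(3)[OF D j]] Dq_D(2)[OF D j] by auto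

lemma phi_good:
  assumes D: "\<psi> \<in> Dq I q" and q: "1 \<le> q" and i: "i \<le> I"
  shows "good (phi I \<psi> i)"
proof -
  define s where "s = (\<lambda>u. \<Sum>j\<in>{i<..I}. 2 * real (j - i) * \<psi> j u)"
  have e: "phi I \<psi> i = (\<lambda>u. phi I \<psi> I u + s u)"
    unfolding s_def by (rule ext) (rule phi_ident[OF i])
  have jI: "j \<in> {i<..I} \<Longrightarrow> j \<in> {1..I}" for j by auto
  have "good (\<lambda>u. phi I \<psi> I u + s u)"
  proof (rule good_add[OF phiI_good[OF D q]])
    show "mono s" unfolding s_def
      by (rule monoI, rule sum_mono, rule mult_left_mono) (auto intro: monoD[OF Dq_mono(1)[OF D jI]])
    show "0 \<le> s x" for x unfolding s_def by (rule sum_nonneg, rule mult_nonneg_nonneg) (auto intro: Dq_mono(2)[OF D jI])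
    show "s x = 0" if "x < 0" for x unfolding s_def using Dq_D(2)[OF D jI that] by simp
    show "s 0 = 0" unfolding s_def using Dq_D(3)[OF D jI] by (simp add: Cset_def)
    show "continuous_on UNIV (\<lambda>u. phi I \<psi> I u + s u)"
      unfolding e[symmetric] by (rule Ck_cont[OF phi_Ck[OF Dq_D(4)[OF D]]])
  qed
  then show ?thesis using e by simp
qed

lemma ereal_fin:
  fixes R :: "nat \<Rightarrow> ereal" and c :: "nat \<Rightarrow> real"
  assumes fin: "finite A" and nn: "\<And>i. i \<in> A \<Longrightarrow> 0 \<le> R i" and cp: "\<And>i. i \<in> A \<Longrightarrow> 0 < c i"
    and s: "(\<Sum>i\<in>A. ereal (c i) * R i) < ereal t"
  shows "\<exists>L. (\<forall>i\<in>A. R i = ereal (L i) \<and> 0 \<le> L i) \<and> (\<Sum>i\<in>A. c i * L i) < t"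
proof -
  have tn: "0 \<le> ereal (c k) * R k" if "k \<in> A" for k
    using nn[OF that] cp[OF that] by simp
  have fi: "R i \<noteq> \<infinity>" if i: "i \<in> A" for i
  proof
    assume inf: "R i = \<infinity>"
    have "(\<Sum>i\<in>A. ereal (c i) * R i) = ereal (c i) * R i + (\<Sum>k\<in>A-{i}. ereal (c k) * R k)"
      by (rule sum.remove[OF fin i])
    also have "ereal (c i) * R i = \<infinity>" using inf cp[OF i] by simp
    also have "0 \<le> (\<Sum>k\<in>A-{i}. ereal (c k) * R k)" by (rule sum_nonneg) (use tn in auto)
    then have "\<infinity> + (\<Sum>k\<in>A-{i}. ereal (c k) * R k) = \<infinity>" by simp
    finally show False using s by simp
  qed
  define L where "L i = real_of_ereal (R i)" for i
  have RL: "R i = ereal (L i)" if "i \<in> A" for i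
    using fi[OF that] nn[OF that] unfolding L_def by (cases "R i") auto
  have "(\<Sum>i\<in>A. ereal (c i) * R i) = ereal (\<Sum>i\<in>A. c i * L i)"
  proof -
    have "(\<Sum>i\<in>A. ereal (c i) * R i) = (\<Sum>i\<in>A. ereal (c i * L i))"
      by (rule sum.cong) (simp_all add: RL)
    then show ?thesis by simp
  qed
  then have "(\<Sum>i\<in>A. c i * L i) < t" using s by simp
  moreover have "\<forall>i\<in>A. R i = ereal (L i) \<and> 0 \<le> L i" using RL nn by fastforce
  ultimately show ?thesis by blast
qed

lemma phi_deriv_pos:
  assumes D: "\<psi> \<in> Dq I q" and q: "1 \<le> q" and i: "i \<in> {1..I}"
  shows "deriv (phi I \<psi> i) u > 0"
proof -
  define R where "R j = (SUP p\<in>prs. ereal ((\<psi> j (fst p) - \<psi> j (snd p)) / (phi I \<psi> j (fst p) - phi I \<psi> j (snd p))))" for j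
  have ck: "\<And>j. j \<in> {1..I} \<Longrightarrow> Ck q (\<psi> j)" by (rule Dq_D(4)[OF D])
  have Rnn: "0 \<le> R j" if j: "j \<in> {1..I}" for j
  proof -
    have "(1::real, 0::real) \<in> prs" by simp
    moreover have "0 \<le> (\<psi> j 1 - \<psi> j 0) / (phi I \<psi> j 1 - phi I \<psi> j 0)"
      using monoD[OF Dq_mono(1)[OF D j], of 0 1] good_less[OF phi_good[OF D q, of j], of 0 1] j
      by (auto intro!: divide_nonneg_pos)
    ultimately show ?thesis unfolding R_def by (intro SUP_upper2[of "(1,0)"]) auto
  qed
  obtain L where L: "\<forall>j\<in>{1..I}. R j = ereal (L j) \<and> 0 \<le> L j" and sL: "(\<Sum>j=1..I. real j * L j) < 1/2"
    using ereal_fin[of "{1..I}" R "\<lambda>j. real j" "1/2"] Rnn Dq_D(6)[OF D] unfolding R_def by auto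
  have dps: "\<And>j x. j \<in> {1..I} \<Longrightarrow> (\<psi> j has_real_derivative deriv (\<psi> j) x) (at x)"
    using Ck_DERIV[OF ck q] by blast
  have dnn: "\<And>j x. j \<in> {1..I} \<Longrightarrow> 0 \<le> deriv (\<psi> j) x"
    using mono_deriv_nonneg[OF Dq_mono(1)[OF D] dps] by blast
  have bound: "deriv (\<psi> j) u \<le> L j" if j: "j \<in> {1..I}" for j
  proof -
    let ?P = "phi I \<psi> j"
    have gP: "good ?P" using phi_good[OF D q] j by simp
    have key: "\<psi> j u1 - \<psi> j u2 \<le> L j * (?P u1 - ?P u2)" if "0 \<le> u2" "u2 < u1" for u1 u2
    proof -
      have "(u1, u2) \<in> prs" using that by auto
      then have "ereal ((\<psi> j u1 - \<psi> j u2) / (?P u1 - ?P u2)) \<le> R j"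
        unfolding R_def by (intro SUP_upper2[of "(u1,u2)"]) auto
      then have "(\<psi> j u1 - \<psi> j u2) / (?P u1 - ?P u2) \<le> L j" using L j by simp
      moreover have "0 < ?P u1 - ?P u2" using good_less[OF gP] that by simp
      ultimately show ?thesis by (simp add: pos_divide_le_eq mult.commute)
    qed
    define F where "F u = L j * ?P u - \<psi> j u" for u
    have F0: "F 0 = 0" using good_0[OF gP] Dq_D(3)[OF D j] by (simp add: F_def Cset_def)
    have Fneg: "F x = L j * x" if "x < 0" for x using good_neg[OF gP that] Dq_D(2)[OF D j that] by (simp add: F_def)
    have Fpos: "0 \<le> x \<Longrightarrow> x < y \<Longrightarrow> F x \<le> F y" for x y using key[of x y] by (simp add: F_def algebra_simps)
    have Lnn: "0 \<le> L j" using L j by simp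
    have "mono F"
    proof (rule monoI)
      fix x y :: real assume xy: "x \<le> y"
      show "F x \<le> F y"
      proof (cases "x = y")
        case True then show ?thesis by simp
      next
        case False
        then have xy': "x < y" using xy by simp
        show ?thesis
        proof (cases "0 \<le> x")
          case True then show ?thesis using Fpos xy' by simp
        next
          case False
          then have Fx: "F x \<le> 0" using Fneg Lnn by (simp add: mult_nonneg_nonpos)
          show ?thesis
          proof (cases "y < 0")
            case True then show ?thesis using Fneg False xy Lnn by (simp add: mult_left_mono)
          next
            case False2: False
            have "F 0 \<le> F y" using Fpos[of 0 y] F0 False2 by (cases "y = 0") auto
            then show ?thesis using Fx F0 by simp
          qed
        qed
      qed
    qed
    have dP0: "(?P has_real_derivative (1 - (\<Sum>k=1..I. 2 * real (min j k) * deriv (\<psi> k) u))) (at u)"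
      by (rule dphi[OF ck q])
    have dP: "(?P has_real_derivative deriv ?P u) (at u)" using dP0 DERIV_imp_deriv[OF dP0] by simp
    have dF: "(F has_real_derivative L j * deriv ?P u - deriv (\<psi> j) u) (at u)"
      unfolding F_def
      by (rule DERIV_diff[OF DERIV_cmult[OF dP] dps[OF j]])
    have "deriv (\<psi> j) u \<le> L j * deriv ?P u" using mono_deriv_nonneg[OF \<open>mono F\<close> dF] by simp
    moreover have "deriv ?P u \<le> 1"
    proof -
      have "0 \<le> (\<Sum>k=1..I. 2 * real (min j k) * deriv (\<psi> k) u)"
        by (rule sum_nonneg, rule mult_nonneg_nonneg) (auto intro: dnn)
      then show ?thesis unfolding DERIV_imp_deriv[OF dP0] by simp
    qed
    then have "L j * deriv ?P u \<le> L j * 1" using Lnn by (rule mult_left_mono)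
    ultimately show ?thesis by simp
  qed
  have "(\<Sum>j=1..I. 2 * real (min i j) * deriv (\<psi> j) u) \<le> (\<Sum>j=1..I. 2 * (real j * L j))"
  proof (rule sum_mono)
    fix j assume j: "j \<in> {1..I}"
    have "real (min i j) * deriv (\<psi> j) u \<le> real j * L j"
      using bound[OF j] dnn[OF j] by (intro mult_mono) auto
    then show "2 * real (min i j) * deriv (\<psi> j) u \<le> 2 * (real j * L j)" by simp
  qed
  also have "\<dots> < 1" using sL by (simp add: sum_distrib_left[symmetric])
  finally have "(\<Sum>j=1..I. 2 * real (min i j) * deriv (\<psi> j) u) < 1" .
  moreover have "deriv (phi I \<psi> i) u = 1 - (\<Sum>j=1..I. 2 * real (min i j) * deriv (\<psi> j) u)"
    by (rule DERIV_imp_deriv[OF dphi[OF ck q]])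
  ultimately show ?thesis by simp
qed



lemma Ups_out: "i \<notin> {1..I} \<Longrightarrow> Ups I \<psi> i = (\<lambda>_. 0)"
  unfolding Ups_def by (rule ext) (simp only: if_False simp_thms)

lemma Ups_eq:
  assumes D: "\<psi> \<in> Dq I q" and q: "1 \<le> q" and i: "i \<in> {1..I}"
  shows "Ups I \<psi> i = (\<lambda>z. \<psi> i (inv (phi I \<psi> i) z))"
proof
  fix z :: real
  have g: "good (phi I \<psi> i)" using phi_good[OF D q] i by simp
  show "Ups I \<psi> i z = \<psi> i (inv (phi I \<psi> i) z)"
  proof (cases "0 \<le> z")
    case True then show ?thesis using i good_inv_into[OF g True] by (simp add: Ups_def)
  next
    case False
    then have "inv (phi I \<psi> i) z = z" using good_neg[OF good_inv[OF g]] by simp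
    then show ?thesis using False Dq_D(2)[OF D i] by (simp add: Ups_def)
  qed
qed

lemma CsetI:
  assumes "mono g" "\<And>x. 0 \<le> g x" "g 0 = 0" "continuous_on UNIV g"
  shows "g \<in> Cset"
  unfolding Cset_def
proof (intro CollectI conjI allI impI)
  show "continuous_on {0..} g" by (rule continuous_on_subset[OF assms(4)]) simp
  show "g 0 = 0" by (rule assms(3))
  show "mono_on {0..} g" by (rule mono_onI) (rule monoD[OF assms(1)])
  show "0 \<le> g u" for u by (rule assms(2))
qed

lemma Ck_inv_good:
  assumes "good K" "Ck q K" "1 \<le> q" "\<And>x. deriv K x \<noteq> 0"
  shows "Ck q (inv K)"
proof -
  obtain q' where q': "q = Suc q'" using assms(3) by (cases q) auto
  show ?thesis using Ck_inv[of q' K] assms good_bij q' by simp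
qed

lemma SUP_reindex_good:
  assumes K: "good K"
  shows "(SUP p\<in>prs. ereal ((g (K (fst p)) - g (K (snd p))) / (K (fst p) - K (snd p))))
       = (SUP p\<in>prs. ereal ((g (fst p) - g (snd p)) / (fst p - snd p)))"
proof -
  define h where "h = (\<lambda>p. (K (fst p), K (snd p)))"
  define F where "F = (\<lambda>p. ereal ((g (fst p) - g (snd p)) / (fst p - snd p)))"
  have im: "h ` prs = prs"
  proof
    show "h ` prs \<subseteq> prs"
    proof
      fix p assume "p \<in> h ` prs"
      then obtain x where x: "x \<in> prs" and px: "p = h x" by (rule imageE)
      obtain a b where xab: "x = (a, b)" by (cases x)
      have ab: "0 \<le> a" "0 \<le> b" "a \<noteq> b" using x unfolding xab by simp_all
      have p: "p = (K a, K b)" using px unfolding xab h_def by simp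
      have "K a \<noteq> K b" using ab(3) good_inj[OF K] by (metis injD)
      moreover have "0 \<le> K a" "0 \<le> K b" using ab good_nonneg[OF K] by blast+
      ultimately show "p \<in> prs" using p by simp
    qed
    show "prs \<subseteq> h ` prs"
    proof
      fix p assume "p \<in> prs"
      obtain a b where p: "p = (a, b)" by (cases p)
      have ab: "0 \<le> a" "0 \<le> b" "a \<noteq> b" using \<open>p \<in> prs\<close> unfolding p by simp_all
      have n: "0 \<le> inv K a" "0 \<le> inv K b" using good_nonneg[OF good_inv[OF K]] ab by blast+
      have "inv K a \<noteq> inv K b"
      proof
        assume "inv K a = inv K b"
        then have "K (inv K a) = K (inv K b)" by simp
        then show False using ab(3) good_f_inv[OF K] by metis
      qed
      then have "(inv K a, inv K b) \<in> prs" using n by simp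
      moreover have "p = h (inv K a, inv K b)" using good_f_inv[OF K] p unfolding h_def by simp
      ultimately show "p \<in> h ` prs" by (rule rev_image_eqI)
    qed
  qed
  have "Sup (F ` prs) = Sup (F ` h ` prs)" by (simp only: im)
  also have "\<dots> = Sup ((F \<circ> h) ` prs)" by (simp only: image_comp)
  also have "F \<circ> h = (\<lambda>p. ereal ((g (K (fst p)) - g (K (snd p))) / (K (fst p) - K (snd p))))"
    unfolding F_def h_def by (rule ext) simp
  finally show ?thesis unfolding F_def by (rule sym)
qed

lemma phi_Ck': "\<psi> \<in> Dq I q \<Longrightarrow> Ck q (phi I \<psi> i)"
  by (rule phi_Ck[OF Dq_D(4)])

lemma phi_inv_Ck:
  assumes D: "\<psi> \<in> Dq I q" and q: "1 \<le> q" and i: "i \<in> {1..I}"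
  shows "Ck q (inv (phi I \<psi> i))"
proof (rule Ck_inv_good[OF phi_good[OF D q] phi_Ck'[OF D] q])
  show "i \<le> I" using i by simp
  fix x show "deriv (phi I \<psi> i) x \<noteq> 0" using phi_deriv_pos[OF D q i, of x] by simp
qed

lemma barDq_D:
  assumes "b \<in> barDq I q"
  shows "\<And>i. i \<notin> {1..I} \<Longrightarrow> b i = (\<lambda>_. 0)"
    "\<And>i u. i \<in> {1..I} \<Longrightarrow> u < 0 \<Longrightarrow> b i u = 0"
    "\<And>i. i \<in> {1..I} \<Longrightarrow> b i \<in> Cset"
    "\<And>i. i \<in> {1..I} \<Longrightarrow> Ck q (b i)"
    "(\<Sum>i=1..I. ereal (real i) *
        (SUP p\<in>prs. ereal ((b i (fst p) - b i (snd p)) / (fst p - snd p))))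
     < ereal (1/2)"
proof -
  show "\<And>i. i \<notin> {1..I} \<Longrightarrow> b i = (\<lambda>_. 0)" using assms by (simp add: barDq_def barDset_def canon_def)
  show z: "\<And>i u. i \<in> {1..I} \<Longrightarrow> u < 0 \<Longrightarrow> b i u = 0" using assms by (simp add: barDq_def barDset_def canon_def)
  show "\<And>i. i \<in> {1..I} \<Longrightarrow> b i \<in> Cset" using assms by (simp add: barDq_def barDset_def)
  show "\<And>i. i \<in> {1..I} \<Longrightarrow> Ck q (b i)"
  proof -
    fix i assume i: "i \<in> {1..I}"
    have "Ck q (ext0 (b i))" using assms i by (simp add: barDq_def Cq_def)
    moreover have "ext0 (b i) = b i" using z[OF i] by (simp add: ext0_id)
    ultimately show "Ck q (b i)" by simp
  qed
  show "(\<Sum>i=1..I. ereal (real i) *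
        (SUP p\<in>prs. ereal ((b i (fst p) - b i (snd p)) / (fst p - snd p))))
     < ereal (1/2)" using assms by (simp add: barDq_def barDset_def)
qed

lemma Ups_in:
  assumes D: "\<psi> \<in> Dq I q" and q: "1 \<le> q"
  shows "Ups I \<psi> \<in> barDq I q"
proof -
  let ?b = "Ups I \<psi>"
  have canon: "canon I ?b" unfolding canon_def by (auto simp: Ups_def)
  have props: "?b i \<in> Cset \<and> Ck q (?b i)" if i: "i \<in> {1..I}" for i
  proof -
    let ?P = "phi I \<psi> i"
    have g: "good ?P" using phi_good[OF D q] i by simp
    have e: "?b i = (\<lambda>z. \<psi> i (inv ?P z))" by (rule Ups_eq[OF D q i])
    have ck: "Ck q (?b i)" unfolding e by (rule Ck_comp[OF Dq_D(4)[OF D i] phi_inv_Ck[OF D q i]])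
    have "?b i \<in> Cset" unfolding e
    proof (rule CsetI)
      show "mono (\<lambda>z. \<psi> i (inv ?P z))"
        using monoD[OF Dq_mono(1)[OF D i]] good_le[OF good_inv[OF g]] by (simp add: mono_def)
      show "0 \<le> \<psi> i (inv ?P x)" for x by (rule Dq_mono(2)[OF D i])
      show "\<psi> i (inv ?P 0) = 0" using good_0[OF good_inv[OF g]] Dq_D(3)[OF D i] by (simp add: Cset_def)
      show "continuous_on UNIV (\<lambda>z. \<psi> i (inv ?P z))" using Ck_cont[OF ck] e by simp
    qed
    then show ?thesis using ck by simp
  qed
  have sums: "(\<Sum>i=1..I. ereal (real i) *
        (SUP p\<in>prs. ereal ((?b i (fst p) - ?b i (snd p)) / (fst p - snd p))))
     = (\<Sum>i=1..I. ereal (real i) *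
        (SUP p\<in>prs. ereal ((\<psi> i (fst p) - \<psi> i (snd p)) / (phi I \<psi> i (fst p) - phi I \<psi> i (snd p)))))"
  proof (rule sum.cong[OF refl])
    fix i assume i: "i \<in> {1..I}"
    let ?P = "phi I \<psi> i"
    have g: "good ?P" using phi_good[OF D q] i by simp
    have bp: "?b i (?P u) = \<psi> i u" for u using Ups_eq[OF D q i] good_inv_f[OF g] by simp
    show "ereal (real i) * (SUP p\<in>prs. ereal ((?b i (fst p) - ?b i (snd p)) / (fst p - snd p)))
        = ereal (real i) * (SUP p\<in>prs. ereal ((\<psi> i (fst p) - \<psi> i (snd p)) / (?P (fst p) - ?P (snd p))))"
      using SUP_reindex_good[OF g, of "?b i"] by (simp add: bp)
  qed
  have "(\<Sum>i=1..I. ereal (real i) *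
        (SUP p\<in>prs. ereal ((?b i (fst p) - ?b i (snd p)) / (fst p - snd p)))) < ereal (1/2)"
    unfolding sums by (rule Dq_D(6)[OF D])
  moreover have "ext0 (?b i) = ?b i" for i by (rule ext0_id) (simp add: Ups_def)
  moreover have "\<forall>i\<in>{1..I}. ?b i \<in> Cset" using props by blast
  ultimately have m1: "?b \<in> barDset I" unfolding barDset_def using canon by simp
  have m2: "\<forall>i\<in>{1..I}. ?b i \<in> Cq q" unfolding Cq_def using props \<open>\<And>i. ext0 (?b i) = ?b i\<close> by simp
  show ?thesis unfolding barDq_def using m1 m2 by simp
qed

lemma gam_props_bar:
  assumes B: "b \<in> barDq I q" and q: "1 \<le> q" and i: "i \<le> I"
  shows "good (gam I b i) \<and> Ck q (gam I b i) \<and> (\<forall>z. 1 \<le> deriv (gam I b i) z)"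
  by (rule gam_props[OF barDq_D(3)[OF B] barDq_D(2)[OF B] barDq_D(4)[OF B] q i])

lemma gam_phi:
  assumes D: "\<psi> \<in> Dq I q" and q: "1 \<le> q"
  shows "i \<le> I \<Longrightarrow> phi I \<psi> i u = gam I (Ups I \<psi>) i (phi I \<psi> I u)"
proof (induction "I - i" arbitrary: i rule: less_induct)
  case less
  show ?case
  proof (cases "i < I")
    case False
    then have "i = I" using less.prems by simp
    then show ?thesis by (simp add: gam_ge)
  next
    case True
    have IH: "j \<in> {i<..I} \<Longrightarrow> gam I (Ups I \<psi>) j (phi I \<psi> I u) = phi I \<psi> j u" for j
      using less.hyps[of j] by auto
    have bp: "j \<in> {i<..I} \<Longrightarrow> Ups I \<psi> j (phi I \<psi> j u) = \<psi> j u" for j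
      using Ups_eq[OF D q, of j] good_inv_f[OF phi_good[OF D q, of j]] by auto
    have "gam I (Ups I \<psi>) i (phi I \<psi> I u)
        = phi I \<psi> I u + (\<Sum>j\<in>{i<..I}. 2 * real (j - i) * Ups I \<psi> j (gam I (Ups I \<psi>) j (phi I \<psi> I u)))"
      by (simp add: gam_lt[OF True])
    also have "(\<Sum>j\<in>{i<..I}. 2 * real (j - i) * Ups I \<psi> j (gam I (Ups I \<psi>) j (phi I \<psi> I u)))
        = (\<Sum>j\<in>{i<..I}. 2 * real (j - i) * \<psi> j u)"
      by (rule sum.cong[OF refl]) (simp add: IH bp)
    finally show ?thesis using phi_ident[of i I \<psi> u] less.prems by simp
  qed
qed

lemma phi_0: "phi I \<psi> 0 = (\<lambda>u. u)"
  by (simp add: fun_eq_iff phi_def)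

lemma Ups_inj:
  assumes D1: "\<psi> \<in> Dq I q" and D2: "\<psi>' \<in> Dq I q" and q: "1 \<le> q" and e: "Ups I \<psi> = Ups I \<psi>'"
  shows "\<psi> = \<psi>'"
proof (rule ext)
  fix i
  let ?b = "Ups I \<psi>"
  have B: "?b \<in> barDq I q" by (rule Ups_in[OF D1 q])
  have g0: "good (gam I ?b 0)" using gam_props_bar[OF B q, of 0] by simp
  have "\<psi> i u = \<psi>' i u" for u
  proof (cases "i \<in> {1..I}")
    case False then show ?thesis using Dq_D(1)[OF D1] Dq_D(1)[OF D2] by simp
  next
    case True
    have a1: "gam I ?b 0 (phi I \<psi> I u) = u" using gam_phi[OF D1 q, of 0 u] by (simp add: phi_0)
    have a2: "gam I ?b 0 (phi I \<psi>' I u) = u" using gam_phi[OF D2 q, of 0 u] e by (simp add: phi_0)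
    have PI: "phi I \<psi> I u = phi I \<psi>' I u" using a1 a2 good_inj[OF g0] by (metis injD)
    have iI: "i \<le> I" using True by simp
    have "\<psi> i u = ?b i (phi I \<psi> i u)"
      using Ups_eq[OF D1 q True] good_inv_f[OF phi_good[OF D1 q iI]] by simp
    also have "\<dots> = ?b i (gam I ?b i (phi I \<psi> I u))" using gam_phi[OF D1 q iI] by simp
    also have "\<dots> = Ups I \<psi>' i (gam I (Ups I \<psi>') i (phi I \<psi>' I u))" using PI e by simp
    also have "\<dots> = Ups I \<psi>' i (phi I \<psi>' i u)" using gam_phi[OF D2 q iI] by simp
    also have "\<dots> = \<psi>' i u"
      using Ups_eq[OF D2 q True] good_inv_f[OF phi_good[OF D2 q iI]] by simp
    finally show ?thesis .
  qed
  then show "\<psi> i = \<psi>' i" by (rule ext)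
qed



lemma Ups_surj:
  assumes B: "b \<in> barDq I q" and q: "1 \<le> q" and I: "1 \<le> I"
  shows "\<exists>\<psi>\<in>Dq I q. Ups I \<psi> = b"
proof -
  define G where "G i = gam I b i" for i
  have gp: "i \<le> I \<Longrightarrow> good (G i) \<and> Ck q (G i) \<and> (\<forall>z. 1 \<le> deriv (G i) z)" for i
    unfolding G_def by (rule gam_props_bar[OF B q])
  have g0: "good (G 0)" using gp[of 0] by simp
  define H where "H = inv (G 0)"
  have gH: "good H" unfolding H_def by (rule good_inv[OF g0])
  have ckH: "Ck q H" unfolding H_def
  proof (rule Ck_inv_good[OF g0 _ q])
    show "Ck q (G 0)" using gp[of 0] by simp
    fix x show "deriv (G 0) x \<noteq> 0" using gp[of 0] by (metis le0 not_one_le_zero)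
  qed
  define K where "K i = (\<lambda>u. G i (H u))" for i
  have gK: "i \<le> I \<Longrightarrow> good (K i)" for i unfolding K_def using gp gH good_comp by blast
  have ckK: "i \<le> I \<Longrightarrow> Ck q (K i)" for i unfolding K_def using gp ckH Ck_comp by blast
  define \<psi> where "\<psi> i = (if i \<in> {1..I} then (\<lambda>u. b i (K i u)) else (\<lambda>_. 0))" for i
  have \<psi>in: "i \<in> {1..I} \<Longrightarrow> \<psi> i = (\<lambda>u. b i (K i u))" for i by (simp add: \<psi>_def)
  have \<psi>out: "i \<notin> {1..I} \<Longrightarrow> \<psi> i = (\<lambda>_. 0)" for i unfolding \<psi>_def by (rule if_not_P)
  have phiK: "phi I \<psi> i = K i" if iI: "i \<le> I" for i
  proof
    fix u
    define z where "z = H u"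
    have u: "u = G 0 z" unfolding z_def H_def using good_f_inv[OF g0] by simp
    have G0: "G 0 z = z + (\<Sum>j\<in>{0<..I}. 2 * real (j - 0) * b j (G j z))"
      unfolding G_def using gam_lt[of 0 I b] I by simp
    have s1: "{0<..I} = {1..I}" by auto
    have G0': "G 0 z = z + (\<Sum>j=1..I. 2 * real j * b j (G j z))" using G0 unfolding s1 by simp
    have s2: "(\<Sum>j=1..I. 2 * real (min i j) * \<psi> j u) = (\<Sum>j=1..I. 2 * real (min i j) * b j (G j z))"
      by (rule sum.cong[OF refl]) (simp add: \<psi>in K_def z_def)
    have "phi I \<psi> i u = z + (\<Sum>j\<in>{i<..I}. 2 * real (j - i) * b j (G j z))"
      unfolding phi_def s2 using sum_ident[OF iI, of "\<lambda>j. b j (G j z)"] u G0' by linarith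
    also have "\<dots> = G i z"
    proof (cases "i < I")
      case True then show ?thesis unfolding G_def using gam_lt[OF True, of b] by simp
    next
      case False then have "i = I" using iI by simp
      then show ?thesis unfolding G_def by (simp add: gam_ge)
    qed
    finally show "phi I \<psi> i u = K i u" by (simp add: K_def z_def)
  qed
  have bm: "i \<in> {1..I} \<Longrightarrow> mono (b i)" for i using Cset_mono(1)[OF barDq_D(3)[OF B]] barDq_D(2)[OF B] by blast
  have bn: "i \<in> {1..I} \<Longrightarrow> 0 \<le> b i x" for i x using Cset_mono(2)[OF barDq_D(3)[OF B]] barDq_D(2)[OF B] by blast
  have props: "\<psi> i \<in> Cset \<and> Ck q (\<psi> i) \<and> (\<forall>u<0. \<psi> i u = 0)" if i: "i \<in> {1..I}" for i
  proof -
    have iI: "i \<le> I" using i by simp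
    have ck: "Ck q (\<psi> i)" unfolding \<psi>in[OF i] by (rule Ck_comp[OF barDq_D(4)[OF B i] ckK[OF iI]])
    have neg: "\<psi> i u = 0" if "u < 0" for u
      using good_neg[OF gK[OF iI] that] barDq_D(2)[OF B i that] by (simp add: \<psi>in[OF i])
    have "\<psi> i \<in> Cset" unfolding \<psi>in[OF i]
    proof (rule CsetI)
      show "mono (\<lambda>u. b i (K i u))"
        using monoD[OF bm[OF i]] good_le[OF gK[OF iI]] by (simp add: mono_def)
      show "0 \<le> b i (K i x)" for x by (rule bn[OF i])
      show "b i (K i 0) = 0" using good_0[OF gK[OF iI]] barDq_D(3)[OF B i] by (simp add: Cset_def)
      show "continuous_on UNIV (\<lambda>u. b i (K i u))" using Ck_cont[OF ck] \<psi>in[OF i] by simp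
    qed
    then show ?thesis using ck neg by simp
  qed
  have canon: "canon I \<psi>" unfolding canon_def using \<psi>out props by simp
  have sums: "(\<Sum>i=1..I. ereal (real i) *
        (SUP p\<in>prs. ereal ((\<psi> i (fst p) - \<psi> i (snd p)) / (phi I \<psi> i (fst p) - phi I \<psi> i (snd p)))))
     = (\<Sum>i=1..I. ereal (real i) *
        (SUP p\<in>prs. ereal ((b i (fst p) - b i (snd p)) / (fst p - snd p))))"
  proof (rule sum.cong[OF refl])
    fix i assume i: "i \<in> {1..I}"
    then have iI: "i \<le> I" by simp
    show "ereal (real i) * (SUP p\<in>prs. ereal ((\<psi> i (fst p) - \<psi> i (snd p)) / (phi I \<psi> i (fst p) - phi I \<psi> i (snd p))))
        = ereal (real i) * (SUP p\<in>prs. ereal ((b i (fst p) - b i (snd p)) / (fst p - snd p)))"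
      unfolding phiK[OF iI] \<psi>in[OF i] using SUP_reindex_good[OF gK[OF iI], of "b i"] by simp
  qed
  have cupI: "phi I \<psi> I \<in> Cup" unfolding phiK[OF order_refl] by (rule good_Cup[OF gK[OF order_refl]])
  have D: "\<psi> \<in> Dq I q"
  proof -
    have "\<forall>i\<in>{1..I}. \<psi> i \<in> Cset" using props by blast
    moreover have "(\<Sum>i=1..I. ereal (real i) *
        (SUP p\<in>prs. ereal ((\<psi> i (fst p) - \<psi> i (snd p)) / (phi I \<psi> i (fst p) - phi I \<psi> i (snd p)))))
       < ereal (1/2)" unfolding sums by (rule barDq_D(5)[OF B])
    ultimately have m1: "\<psi> \<in> Dset I" unfolding Dset_def using canon cupI by simp
    have "\<forall>i\<in>{1..I}. \<psi> i \<in> Cq q"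
    proof
      fix i assume i: "i \<in> {1..I}"
      have "ext0 (\<psi> i) = \<psi> i" by (rule ext0_id) (use props[OF i] in blast)
      then show "\<psi> i \<in> Cq q" unfolding Cq_def using props[OF i] by simp
    qed
    then show ?thesis unfolding Dq_def using m1 by simp
  qed
  have "Ups I \<psi> = b"
  proof (rule ext)
    fix i show "Ups I \<psi> i = b i"
    proof (cases "i \<in> {1..I}")
      case False then show ?thesis using Ups_out[OF False] barDq_D(1)[OF B False] by simp
    next
      case True
      then have iI: "i \<le> I" by simp
      show ?thesis
      proof
        fix z show "Ups I \<psi> i z = b i z"
        proof (cases "0 \<le> z")
          case False then show ?thesis using barDq_D(2)[OF B True] by (simp add: Ups_def)
        next
          case z: True
          have "Ups I \<psi> i z = \<psi> i (the_inv_into {0..} (K i) z)"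
            using True z phiK[OF iI] by (simp add: Ups_def)
          also have "\<dots> = \<psi> i (inv (K i) z)" using good_inv_into[OF gK[OF iI] z] by simp
          also have "\<dots> = b i z" using \<psi>in[OF True] good_f_inv[OF gK[OF iI]] by simp
          finally show ?thesis .
        qed
      qed
    qed
  qed
  then show ?thesis using D by blast
qed

theorem lemma6p2:
  fixes I q :: nat
  assumes "1 \<le> I" and "1 \<le> q"
  shows "(\<forall>\<psi>\<in>Dq I q. \<forall>i\<in>{1..I}. phi I \<psi> i \<in> Cupq q \<and>
            (\<forall>u\<ge>0. deriv (extup (phi I \<psi> i)) u > 0))
       \<and> (\<forall>b\<in>barDq I q. (\<forall>i\<in>{0..I}. gam I b i \<in> Cupq q) \<and>
            (\<forall>z\<ge>0. deriv (extup (gam I b 0)) z > 0))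
       \<and> bij_betw (Ups I) (Dq I q) (barDq I q)"
proof (intro conjI ballI allI impI)
  fix \<psi> i assume D: "\<psi> \<in> Dq I q" and i: "i \<in> {1..I}"
  have g: "good (phi I \<psi> i)" using phi_good[OF D assms(2)] i by simp
  show "phi I \<psi> i \<in> Cupq q" by (rule good_Cupq[OF g phi_Ck'[OF D]])
  fix u :: real
  show "deriv (extup (phi I \<psi> i)) u > 0" unfolding good_extup[OF g] by (rule phi_deriv_pos[OF D assms(2) i])
next
  fix b i assume B: "b \<in> barDq I q" and i: "i \<in> {0..I}"
  then show "gam I b i \<in> Cupq q" using gam_props_bar[OF B assms(2), of i] good_Cupq by simp
next
  fix b and z :: real assume B: "b \<in> barDq I q"
  have "good (gam I b 0) \<and> Ck q (gam I b 0) \<and> (\<forall>z. 1 \<le> deriv (gam I b 0) z)"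
    by (rule gam_props_bar[OF B assms(2)]) simp
  then show "deriv (extup (gam I b 0)) z > 0" using good_extup
    by (metis less_le_trans zero_less_one)
next
  show "bij_betw (Ups I) (Dq I q) (barDq I q)"
    unfolding bij_betw_def
  proof
    show "inj_on (Ups I) (Dq I q)" by (rule inj_onI) (rule Ups_inj[OF _ _ assms(2)])
    show "Ups I ` Dq I q = barDq I q"
    proof
      show "Ups I ` Dq I q \<subseteq> barDq I q" using Ups_in[OF _ assms(2)] by blast
      show "barDq I q \<subseteq> Ups I ` Dq I q"
      proof
        fix b assume "b \<in> barDq I q"
        then obtain \<psi> where "\<psi> \<in> Dq I q" "Ups I \<psi> = b" using Ups_surj[OF _ assms(2) assms(1)] by blast
        then show "b \<in> Ups I ` Dq I q" by blast
      qed
    qed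
  qed
qed

end
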